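(* Let $0<m<M$, let $A,B\in\mathbb{P}_n^+$ satisfy $mI\le A\le MI$ and $mI\le B\le MI$, and let $f:[0,\infty)\to[0,\infty)$ be a differentiable convex function with $f(0)=0$. Suppose that either (i) $\lambda_j(B)<\lambda_n(A)$ for all $j=1,\dots,n$, or (ii) $\lambda_1(A)<\lambda_j(B)$ for all $j=1,\dots,n$. Then $$(\det(f(A)+f(B)))^{1/n}\le 2^{1-\frac1n}\,\frac{f(M)}{M}\big((\det A)^{1/n}+(\det B)^{1/n}\big).$$
   Context: $\mathbb{P}_n^+$ denotes the set of $n\times n$ complex positive definite matrices, $I$ is the identity matrix, $\le$ is the Löwner order, and $f(A)$ is defined by functional calculus. For a Hermitian matrix $X$, $\lambda_1(X)\ge\dots\ge\lambda_n(X)$ are its eigenvalues in decreasing order. *)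

theory Defs
  imports "HOL-Analysis.Analysis" "Jordan_Normal_Form.Matrix" "Jordan_Normal_Form.Determinant"
    "Jordan_Normal_Form.Char_Poly"
begin

definition ctrans :: "complex mat \<Rightarrow> complex mat" where
  "ctrans A = mat (dim_col A) (dim_row A) (\<lambda>(i,j). cnj (A $$ (j,i)))"

definition hermitian :: "nat \<Rightarrow> complex mat \<Rightarrow> bool" where
  "hermitian n A \<longleftrightarrow> A \<in> carrier_mat n n \<and> ctrans A = A"

definition qform :: "complex mat \<Rightarrow> complex vec \<Rightarrow> complex" where
  "qform A x = (\<Sum>i<dim_vec x. cnj (x $ i) * (A *\<^sub>v x) $ i)"

definition psd :: "nat \<Rightarrow> complex mat \<Rightarrow> bool" where
  "psd n A \<longleftrightarrow> hermitian n A \<and> (\<forall>x \<in> carrier_vec n. 0 \<le> Re (qform A x))"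

definition posdef :: "nat \<Rightarrow> complex mat \<Rightarrow> bool" where
  "posdef n A \<longleftrightarrow> hermitian n A \<and>
     (\<forall>x \<in> carrier_vec n. x \<noteq> 0\<^sub>v n \<longrightarrow> 0 < Re (qform A x))"

definition loewner_le :: "nat \<Rightarrow> complex mat \<Rightarrow> complex mat \<Rightarrow> bool" where
  "loewner_le n A B \<longleftrightarrow> hermitian n A \<and> hermitian n B \<and> psd n (B - A)"

definition unitary :: "nat \<Rightarrow> complex mat \<Rightarrow> bool" where
  "unitary n U \<longleftrightarrow> U \<in> carrier_mat n n \<and> U * ctrans U = 1\<^sub>m n"

definition diag_of :: "nat \<Rightarrow> (nat \<Rightarrow> complex) \<Rightarrow> complex mat" where
  "diag_of n d = mat n n (\<lambda>(i,j). if i = j then d i else 0)"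

definition mat_fun :: "nat \<Rightarrow> (real \<Rightarrow> real) \<Rightarrow> complex mat \<Rightarrow> complex mat" where
  "mat_fun n f A = (SOME B. \<exists>U d. unitary n U \<and> (\<forall>i<n. d i \<in> \<real>) \<and>
       A = U * diag_of n d * ctrans U \<and>
       B = U * diag_of n (\<lambda>i. complex_of_real (f (Re (d i)))) * ctrans U)"

text \<open>Largest and smallest eigenvalues (lambda_1 and lambda_n) of a Hermitian matrix.\<close>
definition lambda_max :: "complex mat \<Rightarrow> real" where
  "lambda_max A = Max {Re k | k. eigenvalue A k}"

definition lambda_min :: "complex mat \<Rightarrow> real" where
  "lambda_min A = Min {Re k | k. eigenvalue A k}"

end

theory Submission
  imports Defs "Jordan_Normal_Form.Schur_Decomposition" "Jordan_Normal_Form.Spectral_Radius"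
begin

lemma dim_ctrans[simp]: "dim_row (ctrans A) = dim_col A" "dim_col (ctrans A) = dim_row A"
  unfolding ctrans_def by auto

lemma ctrans_carrier[simp]: "A \<in> carrier_mat n m \<Longrightarrow> ctrans A \<in> carrier_mat m n"
  unfolding ctrans_def by auto

lemma index_ctrans[simp]: "i < dim_col A \<Longrightarrow> j < dim_row A \<Longrightarrow> ctrans A $$ (i,j) = cnj (A $$ (j,i))"
  unfolding ctrans_def by auto

lemma ctrans_ctrans[simp]: "ctrans (ctrans A) = A"
  by (rule eq_matI, auto)

lemma ctrans_mult:
  assumes "A \<in> carrier_mat n k" "B \<in> carrier_mat k m"
  shows "ctrans (A * B) = ctrans B * ctrans A"
proof (rule eq_matI)
  fix i j assume i: "i < dim_row (ctrans B * ctrans A)" and j: "j < dim_col (ctrans B * ctrans A)"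
  have i': "i < m" and j': "j < n" using i j assms by auto
  have "ctrans (A * B) $$ (i,j) = cnj (\<Sum>l<k. A $$ (j,l) * B $$ (l,i))"
    using assms i' j' by (simp add: scalar_prod_def atLeast0LessThan)
  also have "\<dots> = (\<Sum>l<k. cnj (B $$ (l,i)) * cnj (A $$ (j,l)))"
    by (simp add: cnj_sum mult.commute)
  also have "\<dots> = (ctrans B * ctrans A) $$ (i,j)"
    using assms i' j' by (simp add: scalar_prod_def atLeast0LessThan)
  finally show "ctrans (A * B) $$ (i,j) = (ctrans B * ctrans A) $$ (i,j)" .
qed (use assms in auto)

lemma ctrans_one[simp]: "ctrans (1\<^sub>m n) = 1\<^sub>m n"
  by (rule eq_matI, auto)

lemma ctrans_zero[simp]: "ctrans (0\<^sub>m n m) = 0\<^sub>m m n"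
  by (rule eq_matI, auto)

lemma ctrans_add:
  assumes "A \<in> carrier_mat n m" "B \<in> carrier_mat n m"
  shows "ctrans (A + B) = ctrans A + ctrans B"
  using assms by (intro eq_matI) auto

lemma ctrans_minus:
  assumes "A \<in> carrier_mat n m" "B \<in> carrier_mat n m"
  shows "ctrans (A - B) = ctrans A - ctrans B"
  using assms by (intro eq_matI) auto

lemma ctrans_smult_real: "ctrans (complex_of_real r \<cdot>\<^sub>m A) = complex_of_real r \<cdot>\<^sub>m ctrans A"
  by (intro eq_matI) auto

lemma det_map_cnj: "det (map_mat cnj A) = cnj (det A)"
  unfolding det_def by (simp add: cnj_sum cnj_prod sign_def)

lemma det_ctrans:
  assumes "A \<in> carrier_mat n n"
  shows "det (ctrans A) = cnj (det A)"
proof -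
  have "ctrans A = map_mat cnj (transpose_mat A)"
    using assms by (intro eq_matI) auto
  then show ?thesis using det_map_cnj det_transpose[OF assms] by simp
qed

lemma diag_of_carrier[simp]: "diag_of n d \<in> carrier_mat n n"
  unfolding diag_of_def by auto

lemma dim_diag_of[simp]: "dim_row (diag_of n d) = n" "dim_col (diag_of n d) = n"
  unfolding diag_of_def by auto

lemma index_diag_of[simp]: "i < n \<Longrightarrow> j < n \<Longrightarrow> diag_of n d $$ (i,j) = (if i = j then d i else 0)"
  unfolding diag_of_def by auto

lemma ctrans_diag_of:
  assumes "\<forall>i<n. d i \<in> \<real>"
  shows "ctrans (diag_of n d) = diag_of n d"
  using assms by (intro eq_matI) (auto simp: Reals_cnj_iff)

lemma det_diag_of: "det (diag_of n d) = (\<Prod>i<n. d i)"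
proof -
  have "upper_triangular (diag_of n d)" by (auto simp: upper_triangular_def)
  from det_upper_triangular[OF this diag_of_carrier]
  show ?thesis by (simp add: prod_list_diag_prod atLeast0LessThan)
qed

lemma diag_of_mult: "diag_of n a * diag_of n b = diag_of n (\<lambda>i. a i * b i)"
proof (rule eq_matI)
  fix i j assume ij: "i < dim_row (diag_of n (\<lambda>i. a i * b i))" "j < dim_col (diag_of n (\<lambda>i. a i * b i))"
  then have i: "i < n" and j: "j < n" by auto
  have "(diag_of n a * diag_of n b) $$ (i,j) = (\<Sum>k<n. (if i = k then a i else 0) * (if k = j then b k else 0))"
    using i j by (simp add: scalar_prod_def atLeast0LessThan)
  also have "\<dots> = (\<Sum>k<n. if k = i then (if i = j then a i * b i else 0) else 0)"
    by (rule sum.cong) auto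
  also have "\<dots> = (if i = j then a i * b i else 0)"
    using i by simp
  finally show "(diag_of n a * diag_of n b) $$ (i,j) = diag_of n (\<lambda>i. a i * b i) $$ (i,j)"
    using i j by simp
qed auto

lemma unitary_inv:
  assumes "unitary n U" shows "ctrans U * U = 1\<^sub>m n"
  using assms mat_mult_left_right_inverse[of U n "ctrans U"] unfolding unitary_def by auto

lemma unitary_carrier: "unitary n U \<Longrightarrow> U \<in> carrier_mat n n"
  unfolding unitary_def by auto


lemma sum_adj:
  assumes X: "X \<in> carrier_mat n k" and y: "y \<in> carrier_vec n" and z: "z \<in> carrier_vec k"
  shows "(\<Sum>i<n. cnj (y$i) * (X *\<^sub>v z)$i) = (\<Sum>j<k. cnj ((ctrans X *\<^sub>v y)$j) * z$j)"
proof -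
  have "(\<Sum>i<n. cnj (y$i) * (X *\<^sub>v z)$i) = (\<Sum>i<n. \<Sum>j<k. cnj (y$i) * X$$(i,j) * z$j)"
    using X z by (simp add: scalar_prod_def atLeast0LessThan sum_distrib_left mult.assoc)
  also have "\<dots> = (\<Sum>j<k. \<Sum>i<n. cnj (y$i) * X$$(i,j) * z$j)" by (rule sum.swap)
  also have "\<dots> = (\<Sum>j<k. cnj ((ctrans X *\<^sub>v y)$j) * z$j)"
    using X y by (simp add: scalar_prod_def atLeast0LessThan sum_distrib_right sum_distrib_left cnj_sum mult_ac)
  finally show ?thesis .
qed

lemma qform_conj:
  assumes X: "X \<in> carrier_mat n k" and Y: "Y \<in> carrier_mat k k" and y: "y \<in> carrier_vec n"
  shows "qform (X * Y * ctrans X) y = qform Y (ctrans X *\<^sub>v y)"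
proof -
  let ?w = "ctrans X *\<^sub>v y"
  have w: "?w \<in> carrier_vec k" using X y by (metis ctrans_carrier mult_mat_vec_carrier)
  have XT: "ctrans X \<in> carrier_mat k n" using X by simp
  have "(X * Y * ctrans X) *\<^sub>v y = (X * Y) *\<^sub>v ?w"
    using X Y y XT by (meson assoc_mult_mat_vec mult_carrier_mat)
  also have "\<dots> = X *\<^sub>v (Y *\<^sub>v ?w)" using X Y w by simp
  finally have eq: "(X * Y * ctrans X) *\<^sub>v y = X *\<^sub>v (Y *\<^sub>v ?w)" .
  from eq have "qform (X * Y * ctrans X) y = (\<Sum>i<n. cnj (y$i) * (X *\<^sub>v (Y *\<^sub>v ?w))$i)"
    using y unfolding qform_def by simp
  also have "\<dots> = (\<Sum>j<k. cnj (?w$j) * (Y *\<^sub>v ?w)$j)"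
    by (rule sum_adj[OF X y]) (use Y w in auto)
  also have "\<dots> = qform Y ?w" unfolding qform_def using w by (simp only: carrier_vecD)
  finally show ?thesis .
qed

lemma qform_diag:
  assumes z: "z \<in> carrier_vec n"
  shows "qform (diag_of n d) z = (\<Sum>i<n. d i * (cnj (z$i) * z$i))"
proof -
  have "(diag_of n d *\<^sub>v z) $ i = d i * z $ i" if i: "i < n" for i
  proof -
    have "(diag_of n d *\<^sub>v z) $ i = (\<Sum>j<n. (if i = j then d i else 0) * z$j)"
      using i z by (simp add: scalar_prod_def atLeast0LessThan)
    also have "\<dots> = (\<Sum>j<n. if j = i then d i * z$j else 0)" by (rule sum.cong) auto
    also have "\<dots> = d i * z $ i" using i by simp
    finally show ?thesis .
  qed
  then show ?thesis using z unfolding qform_def by (auto intro!: sum.cong simp: mult_ac)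
qed

lemma qform_add:
  assumes "A \<in> carrier_mat n n" "B \<in> carrier_mat n n" "x \<in> carrier_vec n"
  shows "qform (A + B) x = qform A x + qform B x"
  using assms unfolding qform_def
  by (simp add: add_mult_distrib_mat_vec sum.distrib distrib_left)

lemma qform_minus:
  assumes "A \<in> carrier_mat n n" "B \<in> carrier_mat n n" "x \<in> carrier_vec n"
  shows "qform (A - B) x = qform A x - qform B x"
  using assms unfolding qform_def
  by (simp add: minus_mult_distrib_mat_vec sum_subtractf right_diff_distrib)

lemma qform_smult:
  assumes "A \<in> carrier_mat n n" "x \<in> carrier_vec n"
  shows "qform (c \<cdot>\<^sub>m A) x = c * qform A x"
  using assms unfolding qform_def
  by (simp add: sum_distrib_left mult_ac)

lemma qform_one:
  assumes "x \<in> carrier_vec n"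
  shows "qform (1\<^sub>m n) x = (\<Sum>i<n. cnj (x$i) * x$i)"
  using assms unfolding qform_def by simp


lemma cscalar_self: "v \<bullet>c v = complex_of_real (\<Sum>k<dim_vec v. (cmod (v$k))^2)"
proof -
  have "v \<bullet>c v = (\<Sum>k<dim_vec v. v$k * cnj (v$k))"
    unfolding scalar_prod_def by (simp add: atLeast0LessThan)
  also have "\<dots> = (\<Sum>k<dim_vec v. complex_of_real ((cmod (v$k))^2))"
    by (simp only: complex_norm_square)
  also have "\<dots> = complex_of_real (\<Sum>k<dim_vec v. (cmod (v$k))^2)" by (simp only: of_real_sum)
  finally show ?thesis .
qed

lemma unit_completion:
  assumes v: "v \<in> carrier_vec n" and v0: "v \<noteq> 0\<^sub>v n"
  shows "\<exists>W c. unitary n W \<and> col W 0 = c \<cdot>\<^sub>v v"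
proof -
  interpret cof_vec_space n "TYPE(complex)" .
  define b where "b = basis_completion v"
  define ws where "ws = gram_schmidt n b"
  from basis_completion[OF v v0, folded b_def]
  have dist_b: "distinct b" and indep: "\<not> lin_dep (set b)" and b: "set b \<subseteq> carrier_vec n"
    and hdb: "hd b = v" and len_b: "length b = n" by auto
  have n: "n > 0"
  proof (rule ccontr)
    assume "\<not> n > 0"
    then have "n = 0" by simp
    then have "v = 0\<^sub>v n" using v by (intro eq_vecI) auto
    with v0 show False by simp
  qed
  from hdb len_b n obtain vs where bv: "b = v # vs" by (cases b, auto)
  from gram_schmidt_result[OF b dist_b indep refl, folded ws_def]
  have ws: "set ws \<subseteq> carrier_vec n" and orth: "corthogonal ws" and lws: "length ws = n"
    by (auto simp: len_b)
  have hdws: "hd ws = v" unfolding ws_def bv using gram_schmidt_hd[OF v] by simp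
  have ws0: "ws ! 0 = v" using hdws lws n by (cases ws) auto
  define nf where "nf = (\<lambda>w::complex vec. 1 / complex_of_real (sqrt (\<Sum>k<n. (cmod (w$k))^2)))"
  define us where "us = map (\<lambda>w. nf w \<cdot>\<^sub>v w) ws"
  define W where "W = mat_of_cols n us"
  have lus: "length us = n" unfolding us_def using lws by simp
  have wsi: "ws ! i \<in> carrier_vec n" if "i < n" for i using ws lws that by auto
  have usi: "us ! i = nf (ws ! i) \<cdot>\<^sub>v ws ! i" if "i < n" for i using that lws unfolding us_def by simp
  have W: "W \<in> carrier_mat n n" unfolding W_def using mat_of_cols_carrier(1)[of n us] lus by simp
  have Wij: "W $$ (k,i) = nf (ws ! i) * (ws ! i) $ k" if "k < n" "i < n" for k i
    using that wsi[of i] usi[of i] lus unfolding W_def by (simp add: mat_of_cols_def)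
  have pos: "(\<Sum>k<n. (cmod ((ws!i)$k))^2) > 0" if i: "i < n" for i
  proof -
    have "ws ! i \<bullet>c ws ! i \<noteq> 0" using orth i lws by (auto simp: corthogonal_def)
    moreover have "ws ! i \<bullet>c ws ! i = complex_of_real (\<Sum>k<n. (cmod ((ws!i)$k))^2)"
      using cscalar_self[of "ws!i"] wsi[OF i] by (simp only: carrier_vecD)
    ultimately have "(\<Sum>k<n. (cmod ((ws!i)$k))^2) \<noteq> 0" by (metis of_real_0)
    moreover have "(\<Sum>k<n. (cmod ((ws!i)$k))^2) \<ge> 0" by (intro sum_nonneg) auto
    ultimately show ?thesis by linarith
  qed
  have "ctrans W * W = 1\<^sub>m n"
  proof (rule eq_matI)
    fix i j assume "i < dim_row (1\<^sub>m n)" "j < dim_col (1\<^sub>m n)"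
    then have i: "i < n" and j: "j < n" by auto
    have "(ctrans W * W) $$ (i,j) = (\<Sum>k<n. cnj (W $$ (k,i)) * W $$ (k,j))"
      using W i j by (simp add: scalar_prod_def atLeast0LessThan)
    also have "\<dots> = (\<Sum>k<n. cnj (nf (ws!i)) * nf (ws!j) * ((ws!j) $ k * cnj ((ws!i) $ k)))"
      using i j by (auto simp: Wij intro!: sum.cong)
    also have "\<dots> = cnj (nf (ws!i)) * nf (ws!j) * (ws!j \<bullet>c ws!i)"
      using wsi[OF i] wsi[OF j] by (simp add: scalar_prod_def atLeast0LessThan sum_distrib_left)
    also have "\<dots> = (if i = j then 1 else 0)"
    proof (cases "i = j")
      case True
      define s where "s = (\<Sum>k<n. (cmod ((ws!i)$k))^2)"
      have s: "s > 0" using pos[OF i] s_def by simp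
      have e1: "ws!i \<bullet>c ws!i = complex_of_real s" using cscalar_self[of "ws!i"] wsi[OF i] s_def by (simp only: carrier_vecD)
      have e2: "nf (ws!i) = complex_of_real (1 / sqrt s)" unfolding nf_def s_def by simp
      have "cnj (nf (ws!i)) * nf (ws!i) * (ws!i \<bullet>c ws!i) = complex_of_real ((1 / sqrt s) * (1 / sqrt s) * s)"
        by (simp only: e1 e2 complex_cnj_complex_of_real of_real_mult)
      also have "(1 / sqrt s) * (1 / sqrt s) * s = 1" using s
        by (simp add: field_simps)
      finally show ?thesis using True by simp
    next
      case False
      then have "ws!j \<bullet>c ws!i = 0" using orth i j lws by (auto simp: corthogonal_def)
      then show ?thesis using False by simp
    qed
    finally show "(ctrans W * W) $$ (i,j) = 1\<^sub>m n $$ (i,j)" using i j by simp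
  qed (use W in auto)
  then have "W * ctrans W = 1\<^sub>m n"
    using mat_mult_left_right_inverse[of "ctrans W" n W] W by auto
  then have "unitary n W" using W unfolding unitary_def by auto
  moreover have "col W 0 = nf v \<cdot>\<^sub>v v"
    unfolding W_def using n lus usi[of 0] ws0 wsi[of 0] by (simp add: col_mat_of_cols)
  ultimately show ?thesis by blast
qed


definition emb :: "nat \<Rightarrow> complex \<Rightarrow> complex mat \<Rightarrow> complex mat" where
  "emb n a X = mat (Suc n) (Suc n) (\<lambda>(i,j). if i = 0 then (if j = 0 then a else 0)
      else if j = 0 then 0 else X $$ (i - 1, j - 1))"

lemma emb_carrier[simp]: "emb n a X \<in> carrier_mat (Suc n) (Suc n)"
  unfolding emb_def by simp

lemma dim_emb[simp]: "dim_row (emb n a X) = Suc n" "dim_col (emb n a X) = Suc n"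
  unfolding emb_def by simp_all

lemma index_emb:
  "i < Suc n \<Longrightarrow> j < Suc n \<Longrightarrow> emb n a X $$ (i,j) = (if i = 0 then (if j = 0 then a else 0)
      else if j = 0 then 0 else X $$ (i - 1, j - 1))"
  unfolding emb_def by simp

lemma emb_mult:
  assumes X: "X \<in> carrier_mat n n" and Y: "Y \<in> carrier_mat n n"
  shows "emb n a X * emb n b Y = emb n (a * b) (X * Y)"
proof (rule eq_matI)
  fix i j assume "i < dim_row (emb n (a * b) (X * Y))" "j < dim_col (emb n (a * b) (X * Y))"
  then have i: "i < Suc n" and j: "j < Suc n" by auto
  have "(emb n a X * emb n b Y) $$ (i,j) = (\<Sum>k<Suc n. emb n a X $$ (i,k) * emb n b Y $$ (k,j))"
    using i j by (simp add: scalar_prod_def atLeast0LessThan)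
  also have "\<dots> = emb n a X $$ (i,0) * emb n b Y $$ (0,j) +
      (\<Sum>k<n. emb n a X $$ (i,Suc k) * emb n b Y $$ (Suc k,j))"
    by (simp only: sum.lessThan_Suc_shift)
  also have "\<dots> = emb n (a * b) (X * Y) $$ (i,j)"
  proof (cases i)
    case 0
    then show ?thesis using i j by (simp add: index_emb)
  next
    case (Suc i')
    show ?thesis
    proof (cases j)
      case 0
      then show ?thesis using i j Suc by (simp add: index_emb)
    next
      case (Suc j')
      have "(\<Sum>k<n. emb n a X $$ (i,Suc k) * emb n b Y $$ (Suc k,j)) = (\<Sum>k<n. X $$ (i',k) * Y $$ (k,j'))"
        using i j \<open>i = Suc i'\<close> Suc by (intro sum.cong) (auto simp: index_emb)
      also have "\<dots> = (X * Y) $$ (i', j')"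
        using X Y i j \<open>i = Suc i'\<close> Suc by (simp add: scalar_prod_def atLeast0LessThan)
      finally show ?thesis using i j \<open>i = Suc i'\<close> Suc by (simp add: index_emb)
    qed
  qed
  finally show "(emb n a X * emb n b Y) $$ (i,j) = emb n (a * b) (X * Y) $$ (i,j)" .
qed auto

lemma emb_ctrans:
  assumes X: "X \<in> carrier_mat n n"
  shows "ctrans (emb n a X) = emb n (cnj a) (ctrans X)"
  using X by (intro eq_matI) (auto simp: index_emb)

lemma emb_one: "emb n 1 (1\<^sub>m n) = 1\<^sub>m (Suc n)"
  by (intro eq_matI) (auto simp: index_emb)

lemma emb_diag: "emb n a (diag_of n d) = diag_of (Suc n) (\<lambda>i. if i = 0 then a else d (i - 1))"
  by (intro eq_matI) (auto simp: index_emb)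


lemma spectral:
  assumes "hermitian n A"
  shows "\<exists>U d. unitary n U \<and> (\<forall>i<n. d i \<in> \<real>) \<and> A = U * diag_of n d * ctrans U"
  using assms
proof (induction n arbitrary: A)
  case 0
  then have A: "A \<in> carrier_mat 0 0" by (simp add: hermitian_def)
  have "unitary 0 (1\<^sub>m 0)" unfolding unitary_def by simp
  moreover have "A = 1\<^sub>m 0 * diag_of 0 (\<lambda>_. 0) * ctrans (1\<^sub>m 0)"
    using A by (intro eq_matI) auto
  ultimately show ?case by blast
next
  case (Suc n)
  let ?N = "Suc n"
  have A: "A \<in> carrier_mat ?N ?N" and hA: "ctrans A = A" using Suc.prems by (auto simp: hermitian_def)
  have assoc: "\<And>X Y Z. X \<in> carrier_mat ?N ?N \<Longrightarrow> Y \<in> carrier_mat ?N ?N \<Longrightarrow> Z \<in> carrier_mat ?N ?N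
     \<Longrightarrow> X * Y * Z = X * (Y * Z)" by (rule assoc_mult_mat)
  from spectrum_non_empty[OF A] obtain lam where "lam \<in> spectrum A" by auto
  then have "eigenvalue A lam" unfolding spectrum_def by auto
  then obtain v where "eigenvector A v lam" unfolding eigenvalue_def by auto
  then have v: "v \<in> carrier_vec ?N" and v0: "v \<noteq> 0\<^sub>v ?N" and Av: "A *\<^sub>v v = lam \<cdot>\<^sub>v v"
    using A unfolding eigenvector_def by auto
  from unit_completion[OF v v0] obtain W c where uW: "unitary ?N W" and cW: "col W 0 = c \<cdot>\<^sub>v v" by auto
  have W: "W \<in> carrier_mat ?N ?N" using uW unitary_carrier by auto
  have WT: "ctrans W \<in> carrier_mat ?N ?N" using W by simp
  have WWT: "W * ctrans W = 1\<^sub>m ?N" using uW unfolding unitary_def by auto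
  have WTW: "ctrans W * W = 1\<^sub>m ?N" using unitary_inv[OF uW] .
  define u where "u = col W 0"
  have u: "u \<in> carrier_vec ?N" unfolding u_def by (intro carrier_vecI) (use W in simp)
  have Au: "A *\<^sub>v u = lam \<cdot>\<^sub>v u"
  proof -
    have "A *\<^sub>v u = c \<cdot>\<^sub>v (A *\<^sub>v v)" unfolding u_def cW using mult_mat_vec[OF A v] .
    also have "\<dots> = c \<cdot>\<^sub>v (lam \<cdot>\<^sub>v v)" by (simp only: Av)
    also have "\<dots> = (c * lam) \<cdot>\<^sub>v v" by (rule smult_smult_assoc)
    also have "\<dots> = (lam * c) \<cdot>\<^sub>v v" by (simp only: mult.commute)
    also have "\<dots> = lam \<cdot>\<^sub>v (c \<cdot>\<^sub>v v)" by (rule smult_smult_assoc[symmetric])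
    also have "\<dots> = lam \<cdot>\<^sub>v u" unfolding u_def cW ..
    finally show ?thesis .
  qed
  define C where "C = ctrans W * A * W"
  have C: "C \<in> carrier_mat ?N ?N" unfolding C_def using W A WT by (meson mult_carrier_mat)
  have WTA: "ctrans W * A \<in> carrier_mat ?N ?N" using WT A by simp
  have hC: "ctrans C = C"
  proof -
    have "ctrans C = ctrans W * ctrans (ctrans W * A)"
      unfolding C_def by (rule ctrans_mult[OF WTA W])
    also have "ctrans (ctrans W * A) = ctrans A * ctrans (ctrans W)" by (rule ctrans_mult[OF WT A])
    also have "\<dots> = A * W" by (simp add: hA)
    finally have "ctrans C = ctrans W * (A * W)" .
    then show ?thesis unfolding C_def using assoc[OF WT A W] by simp
  qed
  have colC: "col C 0 = lam \<cdot>\<^sub>v unit_vec ?N 0"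
  proof -
    have "col C 0 = (ctrans W * A) *\<^sub>v u" unfolding C_def u_def using col_mult2[OF WTA W, of 0] by simp
    also have "\<dots> = ctrans W *\<^sub>v (A *\<^sub>v u)" by (rule assoc_mult_mat_vec[OF WT A u])
    also have "\<dots> = lam \<cdot>\<^sub>v (ctrans W *\<^sub>v u)" unfolding Au using mult_mat_vec[OF WT u] .
    also have "ctrans W *\<^sub>v u = col (ctrans W * W) 0" unfolding u_def using col_mult2[OF WT W, of 0] by simp
    also have "\<dots> = unit_vec ?N 0" unfolding WTW by simp
    finally show ?thesis .
  qed
  have Ci0: "C $$ (i,0) = (if i = 0 then lam else 0)" if "i < ?N" for i
  proof -
    have "C $$ (i,0) = col C 0 $ i" using C that by (simp add: carrier_matD)
    then show ?thesis unfolding colC using that by simp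
  qed
  have C0j: "C $$ (0,j) = (if j = 0 then cnj lam else 0)" if "j < ?N" for j
  proof -
    have "C $$ (0,j) = ctrans C $$ (0,j)" using hC by simp
    also have "\<dots> = cnj (C $$ (j,0))" using C that by (simp add: carrier_matD)
    finally show ?thesis using Ci0[OF that] by simp
  qed
  have lamr: "cnj lam = lam" using Ci0[of 0] C0j[of 0] by simp
  define A' where "A' = mat n n (\<lambda>(i,j). C $$ (Suc i, Suc j))"
  have A': "A' \<in> carrier_mat n n" unfolding A'_def by simp
  have hA': "hermitian n A'"
    unfolding hermitian_def
  proof
    show "ctrans A' = A'"
    proof (rule eq_matI)
      fix i j assume "i < dim_row A'" "j < dim_col A'"
      then have i: "i < n" and j: "j < n" using A' by auto
      have "ctrans A' $$ (i,j) = cnj (C $$ (Suc j, Suc i))" using i j A' unfolding A'_def by simp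
      also have "\<dots> = ctrans C $$ (Suc i, Suc j)" using i j C by (simp add: carrier_matD)
      also have "\<dots> = A' $$ (i,j)" using i j hC unfolding A'_def by simp
      finally show "ctrans A' $$ (i,j) = A' $$ (i,j)" .
    qed (use A' in \<open>simp_all add: carrier_matD\<close>)
  qed (rule A')
  from Suc.IH[OF hA'] obtain V d' where uV: "unitary n V" and d': "\<forall>i<n. d' i \<in> \<real>"
    and A'V: "A' = V * diag_of n d' * ctrans V" by auto
  have V: "V \<in> carrier_mat n n" using uV unitary_carrier by auto
  have VVT: "V * ctrans V = 1\<^sub>m n" using uV unfolding unitary_def by auto
  have Cemb: "C = emb n lam A'"
  proof (rule eq_matI)
    fix i j assume "i < dim_row (emb n lam A')" "j < dim_col (emb n lam A')"
    then have i: "i < ?N" and j: "j < ?N" by auto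
    show "C $$ (i,j) = emb n lam A' $$ (i,j)"
    proof (cases "i = 0")
      case True then show ?thesis using C0j[OF j] lamr i j by (simp add: index_emb)
    next
      case False
      show ?thesis
      proof (cases "j = 0")
        case True then show ?thesis using Ci0[OF i] False i j by (simp add: index_emb)
      next
        case False2: False
        then show ?thesis using False i j unfolding A'_def by (simp add: index_emb)
      qed
    qed
  qed (use C in \<open>simp_all add: carrier_matD\<close>)
  define U where "U = W * emb n 1 V"
  define d where "d = (\<lambda>i. if i = 0 then lam else d' (i - 1))"
  have E: "emb n 1 V \<in> carrier_mat ?N ?N" by simp
  have U: "U \<in> carrier_mat ?N ?N" unfolding U_def using W by simp
  define E1 where "E1 = emb n 1 V"
  define E1' where "E1' = emb n 1 (ctrans V)"
  define D where "D = emb n lam (diag_of n d')"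
  have E1: "E1 \<in> carrier_mat ?N ?N" and E1': "E1' \<in> carrier_mat ?N ?N" and D: "D \<in> carrier_mat ?N ?N"
    unfolding E1_def E1'_def D_def by simp_all
  have UT: "ctrans U = E1' * ctrans W"
    unfolding U_def E1'_def E1_def using ctrans_mult[OF W E] emb_ctrans[OF V] by simp
  have E1E1': "E1 * E1' = 1\<^sub>m ?N"
    unfolding E1_def E1'_def using V by (simp add: emb_mult VVT emb_one)
  have "U * ctrans U = (W * E1) * (E1' * ctrans W)" unfolding UT unfolding U_def E1_def ..
  also have "\<dots> = W * (E1 * (E1' * ctrans W))" using assoc[OF W E1 mult_carrier_mat[OF E1' WT]] by simp
  also have "E1 * (E1' * ctrans W) = (E1 * E1') * ctrans W" using E1 E1' WT assoc[OF E1 E1' WT] by simp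
  also have "\<dots> = ctrans W" unfolding E1E1' by (rule left_mult_one_mat[OF WT])
  finally have "U * ctrans U = 1\<^sub>m ?N" using WWT by simp
  then have uU: "unitary ?N U" using U unfolding unitary_def by simp
  have dR: "\<forall>i<?N. d i \<in> \<real>" using d' lamr unfolding d_def by (auto simp: Reals_cnj_iff)
  have Dd: "diag_of ?N d = D" unfolding D_def d_def by (simp add: emb_diag)
  have ED: "E1 * D * E1' = C"
    unfolding E1_def D_def E1'_def using V by (simp add: emb_mult A'V Cemb)
  have "U * diag_of ?N d * ctrans U = (W * E1) * D * (E1' * ctrans W)" unfolding UT Dd unfolding U_def E1_def ..
  also have "\<dots> = (W * (E1 * D)) * (E1' * ctrans W)" using assoc[OF W E1 D] by simp
  also have "\<dots> = W * ((E1 * D) * (E1' * ctrans W))" using assoc[OF W mult_carrier_mat[OF E1 D] mult_carrier_mat[OF E1' WT]] by simp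
  also have "(E1 * D) * (E1' * ctrans W) = ((E1 * D) * E1') * ctrans W"
    using assoc[OF mult_carrier_mat[OF E1 D] E1' WT] by simp
  also have "\<dots> = C * ctrans W" unfolding ED ..
  also have "C * ctrans W = ctrans W * A * (W * ctrans W)"
    unfolding C_def using WTA W WT assoc[OF WTA W WT] by simp
  also have "\<dots> = ctrans W * A" unfolding WWT by (rule right_mult_one_mat[OF WTA])
  also have "W * (ctrans W * A) = (W * ctrans W) * A" using assoc[OF W WT A] by simp
  also have "\<dots> = A" unfolding WWT by (rule left_mult_one_mat[OF A])
  finally show ?case using uU dR by blast
qed


abbreviation rdiag :: "nat \<Rightarrow> (nat \<Rightarrow> real) \<Rightarrow> complex mat" where
  "rdiag n r \<equiv> diag_of n (\<lambda>i. complex_of_real (r i))"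

lemma ctrans_vec_carrier:
  assumes "U \<in> carrier_mat n n" "x \<in> carrier_vec n"
  shows "ctrans U *\<^sub>v x \<in> carrier_vec n"
  using assms by (metis ctrans_carrier mult_mat_vec_carrier)

lemma cnj_mult_self: "cnj z * z = complex_of_real ((cmod z)^2)"
  by (metis complex_norm_square mult.commute of_real_power)

lemma re_qform_spec:
  assumes U: "unitary n U" and x: "x \<in> carrier_vec n"
  shows "Re (qform (U * rdiag n r * ctrans U) x) = (\<Sum>i<n. r i * (cmod ((ctrans U *\<^sub>v x)$i))^2)"
proof -
  have UU: "U \<in> carrier_mat n n" using unitary_carrier[OF U] .
  let ?y = "ctrans U *\<^sub>v x"
  have y: "?y \<in> carrier_vec n" using ctrans_vec_carrier[OF UU x] .
  have "qform (U * rdiag n r * ctrans U) x = qform (rdiag n r) ?y"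
    by (rule qform_conj[OF UU diag_of_carrier x])
  also have "\<dots> = (\<Sum>i<n. complex_of_real (r i) * (cnj (?y$i) * ?y$i))"
    by (rule qform_diag[OF y])
  also have "\<dots> = (\<Sum>i<n. complex_of_real (r i * (cmod (?y$i))^2))"
    by (simp only: cnj_mult_self of_real_mult)
  finally show ?thesis by (simp only: Re_sum Re_complex_of_real)
qed

lemma diag_of_one: "diag_of n (\<lambda>_. 1) = 1\<^sub>m n"
  by (intro eq_matI) auto

lemma re_qform_one:
  assumes x: "x \<in> carrier_vec n"
  shows "Re (qform (1\<^sub>m n) x) = (\<Sum>i<n. (cmod (x$i))^2)"
proof -
  have "qform (1\<^sub>m n) x = (\<Sum>i<n. complex_of_real ((cmod (x$i))^2))"
    using qform_one[OF x] by (simp only: cnj_mult_self)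
  then show ?thesis by (simp only: Re_sum Re_complex_of_real)
qed

lemma norm_pres:
  assumes U: "unitary n U" and x: "x \<in> carrier_vec n"
  shows "(\<Sum>i<n. (cmod ((ctrans U *\<^sub>v x)$i))^2) = (\<Sum>i<n. (cmod (x$i))^2)"
proof -
  have UU: "U \<in> carrier_mat n n" using unitary_carrier[OF U] .
  have "U * rdiag n (\<lambda>_. 1) * ctrans U = 1\<^sub>m n"
    using U UU unfolding unitary_def by (simp add: diag_of_one)
  then have "Re (qform (1\<^sub>m n) x) = (\<Sum>i<n. 1 * (cmod ((ctrans U *\<^sub>v x)$i))^2)"
    using re_qform_spec[OF U x, of "\<lambda>_. 1"] by simp
  then show ?thesis using re_qform_one[OF x] by simp
qed

lemma re_qform_minus:
  assumes "A \<in> carrier_mat n n" "B \<in> carrier_mat n n" "x \<in> carrier_vec n"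
  shows "Re (qform (A - B) x) = Re (qform A x) - Re (qform B x)"
  using qform_minus[OF assms] by simp

lemma re_qform_add:
  assumes "A \<in> carrier_mat n n" "B \<in> carrier_mat n n" "x \<in> carrier_vec n"
  shows "Re (qform (A + B) x) = Re (qform A x) + Re (qform B x)"
  using qform_add[OF assms] by simp

lemma re_qform_smult:
  assumes "A \<in> carrier_mat n n" "x \<in> carrier_vec n"
  shows "Re (qform (complex_of_real c \<cdot>\<^sub>m A) x) = c * Re (qform A x)"
  using qform_smult[OF assms] by simp

lemma loewner_qform:
  assumes "loewner_le n X Y" "x \<in> carrier_vec n"
  shows "Re (qform X x) \<le> Re (qform Y x)"
proof -
  have X: "X \<in> carrier_mat n n" and Y: "Y \<in> carrier_mat n n" and p: "psd n (Y - X)"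
    using assms(1) unfolding loewner_le_def hermitian_def by auto
  then have "0 \<le> Re (qform (Y - X) x)" using assms(2) unfolding psd_def by auto
  then show ?thesis using re_qform_minus[OF Y X assms(2)] by simp
qed

lemma unitary_col:
  assumes U: "unitary n U" and i: "i < n"
  shows "ctrans U *\<^sub>v col U i = unit_vec n i"
proof -
  have UU: "U \<in> carrier_mat n n" using unitary_carrier[OF U] .
  have "ctrans U *\<^sub>v col U i = col (ctrans U * U) i"
    using col_mult2[of "ctrans U" n n U n i] UU i by simp
  also have "\<dots> = unit_vec n i" using unitary_inv[OF U] i by simp
  finally show ?thesis .
qed

lemma col_unitary_carrier:
  assumes U: "unitary n U" shows "col U i \<in> carrier_vec n"
  using unitary_carrier[OF U] by (intro carrier_vecI) simp

lemma sum_unit_sq: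
  assumes "i < n" shows "(\<Sum>k<n. r k * (cmod (unit_vec n i $ k))^2) = r i"
proof -
  have "(\<Sum>k<n. r k * (cmod (unit_vec n i $ k))^2) = (\<Sum>k<n. if k = i then r i else 0)"
    using assms by (intro sum.cong) auto
  also have "\<dots> = r i" using assms by simp
  finally show ?thesis .
qed

lemma spec_entry:
  assumes U: "unitary n U" and i: "i < n"
  shows "Re (qform (U * rdiag n r * ctrans U) (col U i)) = r i"
  using re_qform_spec[OF U col_unitary_carrier[OF U], of r] unitary_col[OF U i] sum_unit_sq[OF i]
  by simp

lemma spec_norm1:
  assumes U: "unitary n U" and i: "i < n"
  shows "Re (qform (1\<^sub>m n) (col U i)) = 1"
proof -
  have "(\<Sum>ia<n. (cmod (col U i $ ia))^2) = 1"
    using norm_pres[OF U col_unitary_carrier[OF U, of i]] sum_unit_sq[OF i, of "\<lambda>_. 1"]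
    unfolding unitary_col[OF U i] by simp
  then show ?thesis using re_qform_one[OF col_unitary_carrier[OF U]] by simp
qed

lemma spec_bounds:
  assumes U: "unitary n U" and A: "A = U * rdiag n r * ctrans U"
    and lo: "loewner_le n (complex_of_real m \<cdot>\<^sub>m 1\<^sub>m n) A"
    and hi: "loewner_le n A (complex_of_real M \<cdot>\<^sub>m 1\<^sub>m n)" and i: "i < n"
  shows "m \<le> r i \<and> r i \<le> M"
proof -
  have c: "col U i \<in> carrier_vec n" using col_unitary_carrier[OF U] .
  have one: "1\<^sub>m n \<in> carrier_mat n n" by simp
  have qa: "Re (qform A (col U i)) = r i" using spec_entry[OF U i] A by simp
  have qm: "Re (qform (complex_of_real m \<cdot>\<^sub>m 1\<^sub>m n) (col U i)) = m"
    using re_qform_smult[OF one c] spec_norm1[OF U i] by simp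
  have qM: "Re (qform (complex_of_real M \<cdot>\<^sub>m 1\<^sub>m n) (col U i)) = M"
    using re_qform_smult[OF one c] spec_norm1[OF U i] by simp
  show ?thesis using loewner_qform[OF lo c] loewner_qform[OF hi c] qa qm qM by simp
qed

lemma herm_spec:
  assumes U: "unitary n U"
  shows "hermitian n (U * rdiag n r * ctrans U)"
proof -
  have UU: "U \<in> carrier_mat n n" using unitary_carrier[OF U] .
  have D: "rdiag n r \<in> carrier_mat n n" by simp
  have UD: "U * rdiag n r \<in> carrier_mat n n" using UU by simp
  have "ctrans (U * rdiag n r * ctrans U) = ctrans (ctrans U) * ctrans (U * rdiag n r)"
    by (rule ctrans_mult[OF UD ctrans_carrier[OF UU]])
  also have "ctrans (U * rdiag n r) = ctrans (rdiag n r) * ctrans U" by (rule ctrans_mult[OF UU D])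
  also have "ctrans (rdiag n r) = rdiag n r" by (rule ctrans_diag_of) auto
  finally have "ctrans (U * rdiag n r * ctrans U) = U * (rdiag n r * ctrans U)" by simp
  also have "\<dots> = U * rdiag n r * ctrans U" using assoc_mult_mat[OF UU D ctrans_carrier[OF UU]] by simp
  finally show ?thesis unfolding hermitian_def using mult_carrier_mat[OF UD ctrans_carrier[OF UU]] by simp
qed

lemma mat_fun_spec:
  assumes "hermitian n A"
  shows "\<exists>U r. unitary n U \<and> A = U * rdiag n r * ctrans U \<and>
     mat_fun n f A = U * rdiag n (\<lambda>i. f (r i)) * ctrans U"
proof -
  obtain U d where "unitary n U" "\<forall>i<n. d i \<in> \<real>" "A = U * diag_of n d * ctrans U"
    using spectral[OF assms] by blast
  then have ex: "\<exists>B U d. unitary n U \<and> (\<forall>i<n. d i \<in> \<real>) \<and> A = U * diag_of n d * ctrans U \<and>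
      B = U * diag_of n (\<lambda>i. complex_of_real (f (Re (d i)))) * ctrans U" by blast
  have "\<exists>U d. unitary n U \<and> (\<forall>i<n. d i \<in> \<real>) \<and> A = U * diag_of n d * ctrans U \<and>
      mat_fun n f A = U * diag_of n (\<lambda>i. complex_of_real (f (Re (d i)))) * ctrans U"
    unfolding mat_fun_def by (rule someI_ex[OF ex])
  then obtain U' d' where U': "unitary n U'" and dR: "\<forall>i<n. d' i \<in> \<real>"
    and A': "A = U' * diag_of n d' * ctrans U'"
    and F: "mat_fun n f A = U' * diag_of n (\<lambda>i. complex_of_real (f (Re (d' i)))) * ctrans U'" by blast
  have "diag_of n d' = rdiag n (\<lambda>i. Re (d' i))"
    using dR by (intro eq_matI) auto
  then show ?thesis
    by (intro exI[of _ U'] exI[of _ "\<lambda>i. Re (d' i)"]) (use U' A' F in simp)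
qed

lemma spec_eigen:
  assumes U: "unitary n U" and A: "A = U * rdiag n r * ctrans U" and i: "i < n"
  shows "eigenvalue A (complex_of_real (r i))"
proof -
  have UU: "U \<in> carrier_mat n n" using unitary_carrier[OF U] .
  have D: "rdiag n r \<in> carrier_mat n n" by simp
  have UD: "U * rdiag n r \<in> carrier_mat n n" using UU by simp
  have c: "col U i \<in> carrier_vec n" using col_unitary_carrier[OF U] .
  have Dv: "rdiag n r *\<^sub>v unit_vec n i = complex_of_real (r i) \<cdot>\<^sub>v unit_vec n i"
  proof (rule eq_vecI)
    fix k assume "k < dim_vec (complex_of_real (r i) \<cdot>\<^sub>v unit_vec n i)"
    then have k: "k < n" by simp
    have "(rdiag n r *\<^sub>v unit_vec n i) $ k = (\<Sum>j<n. (if k = j then complex_of_real (r k) else 0) * unit_vec n i $ j)"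
      using k by (simp add: scalar_prod_def atLeast0LessThan)
    also have "\<dots> = (\<Sum>j<n. if j = k then (if k = i then complex_of_real (r i) else 0) else 0)"
      using i by (intro sum.cong) auto
    also have "\<dots> = (if k = i then complex_of_real (r i) else 0)" using k by simp
    finally show "(rdiag n r *\<^sub>v unit_vec n i) $ k = (complex_of_real (r i) \<cdot>\<^sub>v unit_vec n i) $ k"
      using k i by simp
  qed simp
  have "A *\<^sub>v col U i = (U * rdiag n r) *\<^sub>v (ctrans U *\<^sub>v col U i)"
    unfolding A by (rule assoc_mult_mat_vec[OF UD ctrans_carrier[OF UU] c])
  also have "\<dots> = U *\<^sub>v (rdiag n r *\<^sub>v unit_vec n i)"
    unfolding unitary_col[OF U i] by (rule assoc_mult_mat_vec[OF UU D unit_vec_carrier])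
  also have "\<dots> = complex_of_real (r i) \<cdot>\<^sub>v (U *\<^sub>v unit_vec n i)"
    unfolding Dv by (rule mult_mat_vec[OF UU unit_vec_carrier])
  also have "U *\<^sub>v unit_vec n i = col U i"
    using col_mult2[of U n n "1\<^sub>m n" n i] UU i by simp
  finally have Ev: "A *\<^sub>v col U i = complex_of_real (r i) \<cdot>\<^sub>v col U i" .
  have "col U i \<noteq> 0\<^sub>v n"
  proof
    assume "col U i = 0\<^sub>v n"
    moreover have "ctrans U *\<^sub>v 0\<^sub>v n = 0\<^sub>v n"
      using UU by (intro eq_vecI) (simp_all add: scalar_prod_def)
    ultimately have "ctrans U *\<^sub>v col U i = 0\<^sub>v n" by simp
    then show False using unitary_col[OF U i] i by simp
  qed
  moreover have "dim_row A = n" using A UU by simp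
  ultimately show ?thesis unfolding eigenvalue_def eigenvector_def using c Ev by blast
qed


lemma re_qform_gen:
  assumes UU: "U \<in> carrier_mat n n" and x: "x \<in> carrier_vec n"
  shows "Re (qform (U * rdiag n r * ctrans U) x) = (\<Sum>i<n. r i * (cmod ((ctrans U *\<^sub>v x)$i))^2)"
proof -
  let ?y = "ctrans U *\<^sub>v x"
  have y: "?y \<in> carrier_vec n" using ctrans_vec_carrier[OF UU x] .
  have "qform (U * rdiag n r * ctrans U) x = qform (rdiag n r) ?y"
    by (rule qform_conj[OF UU diag_of_carrier x])
  also have "\<dots> = (\<Sum>i<n. complex_of_real (r i) * (cnj (?y$i) * ?y$i))"
    by (rule qform_diag[OF y])
  also have "\<dots> = (\<Sum>i<n. complex_of_real (r i * (cmod (?y$i))^2))"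
    by (simp only: cnj_mult_self of_real_mult)
  finally show ?thesis by (simp only: Re_sum Re_complex_of_real)
qed

lemma herm_conj:
  assumes hP: "hermitian n P" and X: "X \<in> carrier_mat n n"
  shows "hermitian n (X * P * ctrans X)"
proof -
  have P: "P \<in> carrier_mat n n" and cP: "ctrans P = P" using hP unfolding hermitian_def by auto
  have XP: "X * P \<in> carrier_mat n n" using X P by simp
  have "ctrans (X * P * ctrans X) = ctrans (ctrans X) * ctrans (X * P)"
    by (rule ctrans_mult[OF XP ctrans_carrier[OF X]])
  also have "ctrans (X * P) = ctrans P * ctrans X" by (rule ctrans_mult[OF X P])
  finally have "ctrans (X * P * ctrans X) = X * (P * ctrans X)" using cP by simp
  also have "\<dots> = X * P * ctrans X" using assoc_mult_mat[OF X P ctrans_carrier[OF X]] by simp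
  finally show ?thesis unfolding hermitian_def using mult_carrier_mat[OF XP ctrans_carrier[OF X]] by simp
qed

lemma det_conj:
  assumes T: "T \<in> carrier_mat n n" and X: "X \<in> carrier_mat n n"
  shows "det (T * X * ctrans T) = complex_of_real ((cmod (det T))^2) * det X"
proof -
  have "det (T * X * ctrans T) = det (T * X) * det (ctrans T)"
    by (rule det_mult[OF mult_carrier_mat[OF T X] ctrans_carrier[OF T]])
  also have "\<dots> = det T * det X * cnj (det T)" using det_mult[OF T X] det_ctrans[OF T] by simp
  also have "\<dots> = (det T * cnj (det T)) * det X" by (simp add: mult_ac)
  also have "det T * cnj (det T) = complex_of_real ((cmod (det T))^2)"
    using cnj_mult_self[of "det T"] by (simp add: mult.commute)
  finally show ?thesis .
qed

lemma col_unitary_nonzero: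
  assumes U: "unitary n U" and i: "i < n"
  shows "col U i \<noteq> 0\<^sub>v n"
proof
  have UU: "U \<in> carrier_mat n n" using unitary_carrier[OF U] .
  assume "col U i = 0\<^sub>v n"
  moreover have "ctrans U *\<^sub>v 0\<^sub>v n = 0\<^sub>v n"
    using UU by (intro eq_vecI) (simp_all add: scalar_prod_def)
  ultimately have "ctrans U *\<^sub>v col U i = 0\<^sub>v n" by simp
  then show False using unitary_col[OF U i] i by simp
qed

lemma simult:
  assumes hQ: "hermitian n Q" and pQ: "\<forall>x \<in> carrier_vec n. x \<noteq> 0\<^sub>v n \<longrightarrow> 0 < Re (qform Q x)"
    and hP: "hermitian n P" and psdP: "psd n P" and QP: "psd n (Q - P)"
  shows "\<exists>s t. s > 0 \<and> (\<forall>i<n. 0 \<le> t i \<and> t i \<le> 1) \<and> det Q = complex_of_real s \<and>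
     det P = complex_of_real (s * (\<Prod>i<n. t i)) \<and> det (Q + P) = complex_of_real (s * (\<Prod>i<n. 1 + t i))"
proof -
  have Q: "Q \<in> carrier_mat n n" using hQ unfolding hermitian_def by auto
  have P: "P \<in> carrier_mat n n" using hP unfolding hermitian_def by auto
  have assoc: "\<And>X Y Z. X \<in> carrier_mat n n \<Longrightarrow> Y \<in> carrier_mat n n \<Longrightarrow> Z \<in> carrier_mat n n
     \<Longrightarrow> X * Y * Z = X * (Y * Z)" by (rule assoc_mult_mat)
  obtain U q where U: "unitary n U" and Qd: "Q = U * rdiag n q * ctrans U"
    using mat_fun_spec[OF hQ, of id] by blast
  have UU: "U \<in> carrier_mat n n" using unitary_carrier[OF U] .
  have UT: "ctrans U \<in> carrier_mat n n" using UU by simp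
  have qpos: "q i > 0" if i: "i < n" for i
    using pQ col_unitary_carrier[OF U, of i] col_unitary_nonzero[OF U i] spec_entry[OF U i, of q] Qd
    by auto
  define sq where "sq = (\<lambda>i. sqrt (q i))"
  define isq where "isq = (\<lambda>i. 1 / sqrt (q i))"
  define S where "S = U * rdiag n sq"
  define Si where "Si = rdiag n isq * ctrans U"
  have S: "S \<in> carrier_mat n n" unfolding S_def by (rule mult_carrier_mat[OF UU diag_of_carrier])
  have Si: "Si \<in> carrier_mat n n" unfolding Si_def by (rule mult_carrier_mat[OF diag_of_carrier UT])
  have D1: "rdiag n sq * rdiag n isq = 1\<^sub>m n"
    unfolding diag_of_mult using qpos by (intro eq_matI) (fastforce simp: sq_def isq_def)+
  have D2: "rdiag n sq * rdiag n sq = rdiag n q"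
    unfolding diag_of_mult
  proof (rule eq_matI)
    fix i j assume "i < dim_row (rdiag n q)" "j < dim_col (rdiag n q)"
    then have i: "i < n" and j: "j < n" by auto
    have "complex_of_real (sq i) * complex_of_real (sq i) = complex_of_real (sq i * sq i)"
      by (simp only: of_real_mult)
    also have "sq i * sq i = q i" using qpos[OF i] unfolding sq_def by simp
    finally show "diag_of n (\<lambda>i. complex_of_real (sq i) * complex_of_real (sq i)) $$ (i, j) = rdiag n q $$ (i, j)"
      using i j by auto
  qed auto
  have SSi: "S * Si = 1\<^sub>m n"
  proof -
    have "S * Si = U * (rdiag n sq * rdiag n isq) * ctrans U"
      unfolding S_def Si_def
      using assoc[OF mult_carrier_mat[OF UU diag_of_carrier] diag_of_carrier UT]
        assoc[OF UU diag_of_carrier diag_of_carrier] by simp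
    also have "\<dots> = U * ctrans U" unfolding D1 using UU by simp
    also have "\<dots> = 1\<^sub>m n" using U unfolding unitary_def by simp
    finally show ?thesis .
  qed
  have SiS: "Si * S = 1\<^sub>m n" using mat_mult_left_right_inverse[OF S Si SSi] .
  have cS: "ctrans S = rdiag n sq * ctrans U"
    unfolding S_def using ctrans_mult[OF UU diag_of_carrier] ctrans_diag_of[of n "\<lambda>i. complex_of_real (sq i)"]
    by simp
  have QS: "Q = S * ctrans S"
  proof -
    have "S * ctrans S = U * (rdiag n sq * rdiag n sq) * ctrans U"
      unfolding cS unfolding S_def
      using assoc[OF mult_carrier_mat[OF UU diag_of_carrier] diag_of_carrier UT]
        assoc[OF UU diag_of_carrier diag_of_carrier] by simp
    then show ?thesis unfolding D2 Qd by simp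
  qed
  define P' where "P' = Si * P * ctrans Si"
  have hP': "hermitian n P'" unfolding P'_def by (rule herm_conj[OF hP Si])
  obtain V t where V: "unitary n V" and P'd: "P' = V * rdiag n t * ctrans V"
    using mat_fun_spec[OF hP', of id] by blast
  have VV: "V \<in> carrier_mat n n" using unitary_carrier[OF V] .
  have VT: "ctrans V \<in> carrier_mat n n" using VV by simp
  have VVT: "V * ctrans V = 1\<^sub>m n" using V unfolding unitary_def by simp
  define T where "T = S * V"
  define Ti where "Ti = ctrans V * Si"
  have T: "T \<in> carrier_mat n n" unfolding T_def by (rule mult_carrier_mat[OF S VV])
  have Ti: "Ti \<in> carrier_mat n n" unfolding Ti_def by (rule mult_carrier_mat[OF VT Si])
  have cT: "ctrans T = ctrans V * ctrans S" unfolding T_def by (rule ctrans_mult[OF S VV])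
  have TTi: "T * Ti = 1\<^sub>m n"
  proof -
    have "T * Ti = S * (V * ctrans V) * Si"
      unfolding T_def Ti_def using assoc[OF S VV VT] assoc[OF mult_carrier_mat[OF S VV] VT Si] by simp
    also have "\<dots> = 1\<^sub>m n" unfolding VVT using S SSi by simp
    finally show ?thesis .
  qed
  have TiT: "Ti * T = 1\<^sub>m n" using mat_mult_left_right_inverse[OF T Ti TTi] .
  have cSi: "ctrans Si * ctrans S = 1\<^sub>m n"
    using ctrans_mult[OF S Si] SSi by simp
  have cSc: "ctrans S \<in> carrier_mat n n" and cSic: "ctrans Si \<in> carrier_mat n n" using S Si by simp_all
  have PT: "P = T * rdiag n t * ctrans T"
  proof -
    have "T * rdiag n t * ctrans T = S * (V * rdiag n t * ctrans V) * ctrans S"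
      unfolding cT unfolding T_def
      using assoc[OF S VV diag_of_carrier] assoc[OF S mult_carrier_mat[OF VV diag_of_carrier] VT]
        assoc[OF mult_carrier_mat[OF S mult_carrier_mat[OF VV diag_of_carrier]] VT cSc]
        assoc[OF S mult_carrier_mat[OF mult_carrier_mat[OF VV diag_of_carrier] VT] cSc]
        assoc[OF mult_carrier_mat[OF VV diag_of_carrier] VT cSc]
      by simp
    also have "\<dots> = S * P' * ctrans S" unfolding P'd ..
    also have "\<dots> = (S * Si) * P * (ctrans Si * ctrans S)"
      unfolding P'_def
      using assoc[OF S Si P] assoc[OF S mult_carrier_mat[OF Si P] cSic]
        assoc[OF mult_carrier_mat[OF S Si] P cSic]
        assoc[OF mult_carrier_mat[OF mult_carrier_mat[OF S Si] P] cSic cSc]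
        assoc[OF S mult_carrier_mat[OF mult_carrier_mat[OF Si P] cSic] cSc]
        assoc[OF mult_carrier_mat[OF Si P] cSic cSc]
      by simp
    also have "\<dots> = P" unfolding SSi cSi using P by simp
    finally show ?thesis by simp
  qed
  have QT: "Q = T * ctrans T"
  proof -
    have "T * ctrans T = S * (V * ctrans V) * ctrans S"
      unfolding cT unfolding T_def using assoc[OF S VV VT] assoc[OF mult_carrier_mat[OF S VV] VT cSc] by simp
    then show ?thesis unfolding VVT QS using S by simp
  qed
  have r1: "rdiag n (\<lambda>_. 1) = 1\<^sub>m n" using diag_of_one[of n] by simp
  have QT1: "Q = T * rdiag n (\<lambda>_. 1) * ctrans T" unfolding QT r1 using right_mult_one_mat[OF T] by simp
  have tb: "0 \<le> t i \<and> t i \<le> 1" if i: "i < n" for i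
  proof -
    define y where "y = ctrans Ti *\<^sub>v unit_vec n i"
    have y: "y \<in> carrier_vec n" unfolding y_def using ctrans_vec_carrier[OF Ti unit_vec_carrier] .
    have Ty: "ctrans T *\<^sub>v y = unit_vec n i"
    proof -
      have "ctrans T *\<^sub>v y = (ctrans T * ctrans Ti) *\<^sub>v unit_vec n i"
        unfolding y_def using assoc_mult_mat_vec[OF ctrans_carrier[OF T] ctrans_carrier[OF Ti] unit_vec_carrier] by simp
      also have "ctrans T * ctrans Ti = 1\<^sub>m n" using ctrans_mult[OF Ti T] TiT by simp
      finally show ?thesis by simp
    qed
    have "Re (qform P y) = t i"
      unfolding PT re_qform_gen[OF T y] Ty using sum_unit_sq[OF i] by simp
    moreover have "Re (qform Q y) = 1"
      unfolding QT1 re_qform_gen[OF T y] Ty using sum_unit_sq[OF i, of "\<lambda>_. 1"] by simp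
    moreover have "0 \<le> Re (qform P y)" using psdP y unfolding psd_def by auto
    moreover have "0 \<le> Re (qform (Q - P) y)" using QP y unfolding psd_def by auto
    ultimately show ?thesis using re_qform_minus[OF Q P y] by simp
  qed
  define s where "s = (cmod (det T))^2"
  have "det T * det Ti = 1" using det_mult[OF T Ti] TTi by simp
  then have "det T \<noteq> 0" by auto
  then have s: "s > 0" unfolding s_def by simp
  have one: "1\<^sub>m n \<in> carrier_mat n n" by simp
  have dQ: "det Q = complex_of_real s"
    using det_conj[OF T one] QT T unfolding s_def by simp
  have dP: "det P = complex_of_real (s * (\<Prod>i<n. t i))"
    using det_conj[OF T diag_of_carrier, of t] PT unfolding s_def det_diag_of by (simp add: of_real_prod)
  have "Q + P = T * (1\<^sub>m n + rdiag n t) * ctrans T"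
  proof -
    have "T * (1\<^sub>m n + rdiag n t) = T * 1\<^sub>m n + T * rdiag n t"
      by (rule mult_add_distrib_mat[OF T one diag_of_carrier])
    then have "T * (1\<^sub>m n + rdiag n t) * ctrans T = (T * 1\<^sub>m n) * ctrans T + (T * rdiag n t) * ctrans T"
      using add_mult_distrib_mat[OF mult_carrier_mat[OF T one] mult_carrier_mat[OF T diag_of_carrier] ctrans_carrier[OF T]]
      by simp
    then show ?thesis unfolding QT PT using T by simp
  qed
  also have "1\<^sub>m n + rdiag n t = rdiag n (\<lambda>i. 1 + t i)" by (intro eq_matI) auto
  finally have dQP: "det (Q + P) = complex_of_real (s * (\<Prod>i<n. 1 + t i))"
    using det_conj[OF T diag_of_carrier, of "\<lambda>i. 1 + t i"] unfolding s_def det_diag_of by (simp add: of_real_prod)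
  show ?thesis using s tb dQ dP dQP by blast
qed


lemma prod_01:
  assumes "\<forall>i<n. 0 \<le> t i \<and> t i \<le> (1::real)"
  shows "0 \<le> (\<Prod>i<n. t i) \<and> (\<Prod>i<n. t i) \<le> 1"
  using assms by (intro conjI prod_nonneg prod_le_1) auto

lemma prod_one_plus:
  assumes "\<forall>i<n. 0 \<le> t i \<and> t i \<le> (1::real)"
  shows "2 * (\<Prod>i<n. 1 + t i) \<le> 2 ^ n * (1 + (\<Prod>i<n. t i))"
  using assms
proof (induction n)
  case 0
  then show ?case by simp
next
  case (Suc n)
  define p where "p = (\<Prod>i<n. t i)"
  define x where "x = t n"
  have p: "0 \<le> p" "p \<le> 1" using prod_01[of n t] Suc.prems unfolding p_def by auto
  have x: "0 \<le> x" "x \<le> 1" using Suc.prems unfolding x_def by auto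
  have IH: "2 * (\<Prod>i<n. 1 + t i) \<le> 2 ^ n * (1 + p)" using Suc unfolding p_def by auto
  have key: "(1 + p) * (1 + x) \<le> 2 * (1 + p * x)"
  proof -
    have "0 \<le> (1 - p) * (1 - x)" using p x by simp
    then show ?thesis by (simp add: algebra_simps)
  qed
  have "2 * (\<Prod>i<Suc n. 1 + t i) = (2 * (\<Prod>i<n. 1 + t i)) * (1 + x)" unfolding x_def by simp
  also have "\<dots> \<le> (2 ^ n * (1 + p)) * (1 + x)" using IH x by (intro mult_right_mono) auto
  also have "\<dots> = 2 ^ n * ((1 + p) * (1 + x))" by simp
  also have "\<dots> \<le> 2 ^ n * (2 * (1 + p * x))" using key by (intro mult_left_mono) auto
  also have "\<dots> = 2 ^ Suc n * (1 + (\<Prod>i<Suc n. t i))" unfolding p_def x_def by simp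
  finally show ?case .
qed


lemma pow_add_ge:
  assumes x: "0 \<le> x" and y: "0 \<le> (y::real)" and n: "n > 0"
  shows "x ^ n + y ^ n \<le> (x + y) ^ n"
  using n
proof (induction n)
  case 0 then show ?case by simp
next
  case (Suc n)
  show ?case
  proof (cases "n = 0")
    case True then show ?thesis by simp
  next
    case False
    then have IH: "x ^ n + y ^ n \<le> (x + y) ^ n" using Suc by simp
    have "x ^ Suc n + y ^ Suc n \<le> (x ^ n + y ^ n) * (x + y)"
      using x y by (simp add: algebra_simps)
    also have "\<dots> \<le> (x + y) ^ n * (x + y)" using IH x y by (intro mult_right_mono) auto
    finally show ?thesis by (simp add: mult.commute)
  qed
qed

lemma root_pow:
  assumes "0 \<le> (z::real)" "n > 0"
  shows "(z ^ n) powr (1 / real n) = z"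
proof (cases "z = 0")
  case True then show ?thesis using assms by simp
next
  case False
  then have z: "z > 0" using assms by simp
  have "(z ^ n) powr (1 / real n) = (z powr real n) powr (1 / real n)" using powr_realpow[OF z] by simp
  also have "\<dots> = z" using assms z by (simp add: powr_powr)
  finally show ?thesis .
qed

lemma pow_root:
  assumes "0 \<le> (a::real)" "n > 0"
  shows "(a powr (1 / real n)) ^ n = a"
proof (cases "a = 0")
  case True then show ?thesis using assms by simp
next
  case False
  then have a: "a > 0" using assms by simp
  have "(a powr (1 / real n)) ^ n = (a powr (1 / real n)) powr real n"
    using powr_realpow[of "a powr (1 / real n)" n] a by simp
  also have "\<dots> = a" using assms a by (simp add: powr_powr)
  finally show ?thesis .
qed

lemma powr_subadd:
  assumes a: "0 \<le> (a::real)" and b: "0 \<le> b" and n: "n > 0"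
  shows "(a + b) powr (1 / real n) \<le> a powr (1 / real n) + b powr (1 / real n)"
proof -
  define x where "x = a powr (1 / real n)"
  define y where "y = b powr (1 / real n)"
  have x: "0 \<le> x" and y: "0 \<le> y" unfolding x_def y_def by simp_all
  have "a + b = x ^ n + y ^ n" unfolding x_def y_def using pow_root[OF a n] pow_root[OF b n] by simp
  also have "\<dots> \<le> (x + y) ^ n" by (rule pow_add_ge[OF x y n])
  finally have "(a + b) powr (1 / real n) \<le> ((x + y) ^ n) powr (1 / real n)"
    using a b by (intro powr_mono2) auto
  also have "\<dots> = x + y" using root_pow[of "x + y" n] x y n by simp
  finally show ?thesis unfolding x_def y_def .
qed

lemma convex_bound:
  assumes conv: "convex_on {0..} f" and f0: "f 0 = 0" and M: "0 < (M::real)"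
    and t: "0 \<le> t" "t \<le> M"
  shows "f t \<le> (f M / M) * t"
proof -
  define l where "l = t / M"
  have l: "0 \<le> l" "l \<le> 1" unfolding l_def using t M by auto
  have "f ((1 - l) *\<^sub>R 0 + l *\<^sub>R M) \<le> (1 - l) * f 0 + l * f M"
    using convex_onD[OF conv, of l 0 M] l M by auto
  moreover have "(1 - l) *\<^sub>R 0 + l *\<^sub>R M = t" unfolding l_def using M by simp
  ultimately have "f t \<le> l * f M" using f0 by simp
  then show ?thesis unfolding l_def by (simp add: field_simps)
qed


lemma qform_zero_vec: "qform A (0\<^sub>v n) = 0"
  unfolding qform_def by simp

lemma posdef_psd:
  assumes "posdef n A" shows "psd n A"
  unfolding psd_def
proof (intro conjI ballI)
  show "hermitian n A" using assms unfolding posdef_def by simp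
  fix x :: "complex vec" assume x: "x \<in> carrier_vec n"
  show "0 \<le> Re (qform A x)"
  proof (cases "x = 0\<^sub>v n")
    case True then show ?thesis by (simp add: qform_zero_vec)
  next
    case False then show ?thesis using assms x unfolding posdef_def by force
  qed
qed

lemma eig_fin:
  assumes "A \<in> carrier_mat n n"
  shows "finite {Re k |k. eigenvalue A k}"
proof -
  have "{Re k |k. eigenvalue A k} = Re ` spectrum A" unfolding spectrum_def by auto
  then show ?thesis using card_finite_spectrum(1)[OF assms] by simp
qed

lemma spec_le:
  assumes U: "unitary n U" and x: "x \<in> carrier_vec n" and le: "\<forall>i<n. g i \<le> c * r i"
  shows "Re (qform (U * rdiag n g * ctrans U) x) \<le> c * Re (qform (U * rdiag n r * ctrans U) x)"
proof -
  have UU: "U \<in> carrier_mat n n" using unitary_carrier[OF U] .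
  let ?w = "\<lambda>i. (cmod ((ctrans U *\<^sub>v x)$i))^2"
  have "(\<Sum>i<n. g i * ?w i) \<le> (\<Sum>i<n. c * r i * ?w i)"
    using le by (intro sum_mono mult_right_mono) auto
  also have "\<dots> = c * (\<Sum>i<n. r i * ?w i)" by (simp add: sum_distrib_left mult_ac)
  finally show ?thesis unfolding re_qform_gen[OF UU x] .
qed

lemma spec_nonneg:
  assumes U: "unitary n U" and x: "x \<in> carrier_vec n" and le: "\<forall>i<n. 0 \<le> g i"
  shows "0 \<le> Re (qform (U * rdiag n g * ctrans U) x)"
proof -
  have UU: "U \<in> carrier_mat n n" using unitary_carrier[OF U] .
  show ?thesis unfolding re_qform_gen[OF UU x] using le by (intro sum_nonneg) auto
qed

lemma spec_sep:
  assumes UA: "unitary n UA" and UB: "unitary n UB" and x: "x \<in> carrier_vec n"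
    and rB: "\<forall>i<n. rB i \<le> \<alpha>" and rA: "\<forall>i<n. \<alpha> \<le> rA i"
  shows "Re (qform (UB * rdiag n rB * ctrans UB) x) \<le> Re (qform (UA * rdiag n rA * ctrans UA) x)"
proof -
  have UAc: "UA \<in> carrier_mat n n" using unitary_carrier[OF UA] .
  have UBc: "UB \<in> carrier_mat n n" using unitary_carrier[OF UB] .
  let ?wA = "\<lambda>i. (cmod ((ctrans UA *\<^sub>v x)$i))^2"
  let ?wB = "\<lambda>i. (cmod ((ctrans UB *\<^sub>v x)$i))^2"
  have "(\<Sum>i<n. rB i * ?wB i) \<le> (\<Sum>i<n. \<alpha> * ?wB i)"
    using rB by (intro sum_mono mult_right_mono) auto
  also have "\<dots> = \<alpha> * (\<Sum>i<n. ?wB i)" by (simp add: sum_distrib_left)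
  also have "\<dots> = \<alpha> * (\<Sum>i<n. ?wA i)" using norm_pres[OF UA x] norm_pres[OF UB x] by simp
  also have "\<dots> = (\<Sum>i<n. \<alpha> * ?wA i)" by (simp add: sum_distrib_left)
  also have "\<dots> \<le> (\<Sum>i<n. rA i * ?wA i)"
    using rA by (intro sum_mono mult_right_mono) auto
  finally show ?thesis unfolding re_qform_gen[OF UAc x] re_qform_gen[OF UBc x] .
qed

lemma det_AB_bound:
  assumes pA: "posdef n A" and pB: "posdef n B" and AB: "psd n (A - B)"
  shows "Re (det (A + B)) \<le> 2 ^ n / 2 * (Re (det A) + Re (det B)) \<and> 0 \<le> Re (det A) \<and> 0 \<le> Re (det B)"
proof -
  have hA: "hermitian n A" and hB: "hermitian n B" using pA pB unfolding posdef_def by auto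
  obtain s t where s: "s > 0" and t: "\<forall>i<n. 0 \<le> t i \<and> t i \<le> 1"
    and dA: "det A = complex_of_real s" and dB: "det B = complex_of_real (s * (\<Prod>i<n. t i))"
    and dAB: "det (A + B) = complex_of_real (s * (\<Prod>i<n. 1 + t i))"
    using simult[OF hA _ hB posdef_psd[OF pB] AB] pA unfolding posdef_def by blast
  have p: "0 \<le> (\<Prod>i<n. t i)" using prod_01[OF t] by simp
  have "s * (\<Prod>i<n. 1 + t i) \<le> s * (2 ^ n / 2 * (1 + (\<Prod>i<n. t i)))"
    using prod_one_plus[OF t] s by (intro mult_left_mono) auto
  moreover have "Re (det A) = s" using dA by simp
  moreover have "Re (det B) = s * (\<Prod>i<n. t i)" unfolding dB by (simp only: Re_complex_of_real)
  moreover have "Re (det (A + B)) = s * (\<Prod>i<n. 1 + t i)" unfolding dAB by (simp only: Re_complex_of_real)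
  ultimately show ?thesis using s p by (simp add: algebra_simps)
qed


lemma final_arith:
  fixes L X a b c :: real and n :: nat
  assumes n: "n > 0" and L0: "0 \<le> L" and LX: "L \<le> c ^ n * X" and Xab: "X \<le> 2 ^ n / 2 * (a + b)"
    and a: "0 \<le> a" and b: "0 \<le> b" and c: "0 \<le> c"
  shows "L powr (1 / real n) \<le> 2 powr (1 - 1 / real n) * c * (a powr (1 / real n) + b powr (1 / real n))"
proof -
  have "L \<le> c ^ n * (2 ^ n / 2 * (a + b))"
    using LX Xab c by (meson order_trans mult_left_mono zero_le_power)
  then have "L powr (1 / real n) \<le> (c ^ n * (2 ^ n / 2) * (a + b)) powr (1 / real n)"
    using L0 by (intro powr_mono2) (auto simp: mult_ac)
  also have "\<dots> = (c ^ n) powr (1 / real n) * (2 ^ n / 2) powr (1 / real n) * (a + b) powr (1 / real n)"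
    by (simp only: powr_mult)
  also have "(c ^ n) powr (1 / real n) = c" by (rule root_pow[OF c n])
  also have "(2 ^ n / 2 :: real) powr (1 / real n) = 2 powr (1 - 1 / real n)"
  proof -
    have "(2 ^ n / 2 :: real) = 2 powr (real n - 1)"
      by (simp add: powr_diff powr_realpow)
    then have "(2 ^ n / 2 :: real) powr (1 / real n) = 2 powr ((real n - 1) * (1 / real n))"
      by (simp add: powr_powr)
    also have "(real n - 1) * (1 / real n) = 1 - 1 / real n" using n by (simp add: field_simps)
    finally show ?thesis .
  qed
  also have "c * 2 powr (1 - 1 / real n) * (a + b) powr (1 / real n)
      \<le> c * 2 powr (1 - 1 / real n) * (a powr (1 / real n) + b powr (1 / real n))"
    using powr_subadd[OF a b n] c by (intro mult_left_mono) auto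
  finally show ?thesis by (simp add: mult_ac)
qed

theorem theorem3p3:
  fixes n :: nat and m M :: real and A B :: "complex mat" and f :: "real \<Rightarrow> real"
  assumes "n > 0"
    and "0 < m" and "m < M"
    and "posdef n A" and "posdef n B"
    and "loewner_le n (complex_of_real m \<cdot>\<^sub>m 1\<^sub>m n) A" and "loewner_le n A (complex_of_real M \<cdot>\<^sub>m 1\<^sub>m n)"
    and "loewner_le n (complex_of_real m \<cdot>\<^sub>m 1\<^sub>m n) B" and "loewner_le n B (complex_of_real M \<cdot>\<^sub>m 1\<^sub>m n)"
    and "\<forall>x\<ge>0. f x \<ge> 0"
    and "f differentiable_on {0..}"
    and "convex_on {0..} f"
    and "f 0 = 0"
    and "(\<forall>k. eigenvalue B k \<longrightarrow> Re k < lambda_min A) \<or>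
         (\<forall>k. eigenvalue B k \<longrightarrow> lambda_max A < Re k)"
  shows "(Re (det (mat_fun n f A + mat_fun n f B))) powr (1 / real n)
          \<le> 2 powr (1 - 1 / real n) * (f M / M) *
             ((Re (det A)) powr (1 / real n) + (Re (det B)) powr (1 / real n))"
proof -
  note n = assms(1) and m0 = assms(2) and mM = assms(3) and pA = assms(4) and pB = assms(5)
  note loA = assms(6) and hiA = assms(7) and loB = assms(8) and hiB = assms(9)
  note fpos = assms(10) and conv = assms(12) and f0 = assms(13) and eig = assms(14)
  have M0: "M > 0" using m0 mM by simp
  have hA: "hermitian n A" and hB: "hermitian n B" using pA pB unfolding posdef_def by auto
  have Ac: "A \<in> carrier_mat n n" and Bc: "B \<in> carrier_mat n n" using hA hB unfolding hermitian_def by auto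
  obtain UA rA where UA: "unitary n UA" and Ad: "A = UA * rdiag n rA * ctrans UA"
    and FAd: "mat_fun n f A = UA * rdiag n (\<lambda>i. f (rA i)) * ctrans UA"
    using mat_fun_spec[OF hA, of f] by blast
  obtain UB rB where UB: "unitary n UB" and Bd: "B = UB * rdiag n rB * ctrans UB"
    and FBd: "mat_fun n f B = UB * rdiag n (\<lambda>i. f (rB i)) * ctrans UB"
    using mat_fun_spec[OF hB, of f] by blast
  have UAc: "UA \<in> carrier_mat n n" and UBc: "UB \<in> carrier_mat n n"
    using unitary_carrier[OF UA] unitary_carrier[OF UB] by auto
  have bA: "m \<le> rA i \<and> rA i \<le> M" if "i < n" for i by (rule spec_bounds[OF UA Ad loA hiA that])
  have bB: "m \<le> rB i \<and> rB i \<le> M" if "i < n" for i by (rule spec_bounds[OF UB Bd loB hiB that])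
  define c where "c = f M / M"
  have c0: "0 \<le> c" unfolding c_def using fpos M0 by simp
  have fb: "0 \<le> f t \<and> f t \<le> c * t" if "0 \<le> t" "t \<le> M" for t
    using fpos that convex_bound[OF conv f0 M0 that] unfolding c_def by (simp add: mult_ac)
  have fA: "\<forall>i<n. 0 \<le> f (rA i) \<and> f (rA i) \<le> c * rA i" using fb bA m0 by (meson order_trans less_imp_le)
  have fB: "\<forall>i<n. 0 \<le> f (rB i) \<and> f (rB i) \<le> c * rB i" using fb bB m0 by (meson order_trans less_imp_le)
  define FA where "FA = mat_fun n f A"
  define FB where "FB = mat_fun n f B"
  have hFA: "hermitian n FA" unfolding FA_def FAd by (rule herm_spec[OF UA])
  have hFB: "hermitian n FB" unfolding FB_def FBd by (rule herm_spec[OF UB])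
  have FAc: "FA \<in> carrier_mat n n" and FBc: "FB \<in> carrier_mat n n"
    using hFA hFB unfolding hermitian_def by auto
  have LHS: "0 \<le> Re (det (FA + FB)) \<and> Re (det (FA + FB)) \<le> c ^ n * Re (det (A + B))"
  proof (cases "c = 0")
    case True
    have zA: "rdiag n (\<lambda>i. f (rA i)) = 0\<^sub>m n n" using fA True by (intro eq_matI) force+
    have zB: "rdiag n (\<lambda>i. f (rB i)) = 0\<^sub>m n n" using fB True by (intro eq_matI) force+
    have "FA = 0\<^sub>m n n" unfolding FA_def FAd zA using UAc by simp
    moreover have "FB = 0\<^sub>m n n" unfolding FB_def FBd zB using UBc by simp
    ultimately have "FA + FB = 0\<^sub>m n n" by simp
    then show ?thesis using True n by (simp add: power_0_left)
  next
    case False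
    then have cp: "c > 0" using c0 by simp
    define Q where "Q = complex_of_real c \<cdot>\<^sub>m (A + B)"
    define P where "P = FA + FB"
    have ABc: "A + B \<in> carrier_mat n n" using Ac Bc by simp
    have Qc: "Q \<in> carrier_mat n n" unfolding Q_def using ABc Bc by simp
    have Pc: "P \<in> carrier_mat n n" unfolding P_def using FAc FBc by simp
    have hQ: "hermitian n Q"
      unfolding hermitian_def Q_def using Qc Ac Bc hA hB
      by (simp add: ctrans_smult_real ctrans_add[OF Ac Bc] hermitian_def Q_def)
    have hP: "hermitian n P"
      unfolding hermitian_def P_def using Pc FAc FBc hFA hFB
      by (simp add: ctrans_add[OF FAc FBc] hermitian_def P_def)
    have qQ: "Re (qform Q x) = c * (Re (qform A x) + Re (qform B x))" if x: "x \<in> carrier_vec n" for x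
      unfolding Q_def using re_qform_smult[OF ABc x] re_qform_add[OF Ac Bc x] by simp
    have qP: "Re (qform P x) = Re (qform FA x) + Re (qform FB x)" if x: "x \<in> carrier_vec n" for x
      unfolding P_def using re_qform_add[OF FAc FBc x] .
    have pQ: "\<forall>x \<in> carrier_vec n. x \<noteq> 0\<^sub>v n \<longrightarrow> 0 < Re (qform Q x)"
    proof (intro ballI impI)
      fix x :: "complex vec" assume x: "x \<in> carrier_vec n" and x0: "x \<noteq> 0\<^sub>v n"
      have "0 < Re (qform A x)" "0 < Re (qform B x)" using pA pB x x0 unfolding posdef_def by auto
      then show "0 < Re (qform Q x)" using qQ[OF x] cp by simp
    qed
    have psdP: "psd n P" unfolding psd_def
    proof (intro conjI ballI)
      show "hermitian n P" by (rule hP)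
      fix x :: "complex vec" assume x: "x \<in> carrier_vec n"
      have "0 \<le> Re (qform FA x)" unfolding FA_def FAd using spec_nonneg[OF UA x, of "\<lambda>i. f (rA i)"] fA by simp
      moreover have "0 \<le> Re (qform FB x)" unfolding FB_def FBd using spec_nonneg[OF UB x, of "\<lambda>i. f (rB i)"] fB by simp
      ultimately show "0 \<le> Re (qform P x)" using qP[OF x] by simp
    qed
    have psdQP: "psd n (Q - P)" unfolding psd_def
    proof (intro conjI ballI)
      show "hermitian n (Q - P)"
        using hQ hP Qc Pc unfolding hermitian_def by (simp add: ctrans_minus[OF Qc Pc] minus_carrier_mat[OF Pc])
      fix x :: "complex vec" assume x: "x \<in> carrier_vec n"
      have "Re (qform FA x) \<le> c * Re (qform A x)" unfolding FA_def unfolding FAd unfolding Ad using spec_le[OF UA x, of "\<lambda>i. f (rA i)" c rA] fA by simp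
      moreover have "Re (qform FB x) \<le> c * Re (qform B x)" unfolding FB_def unfolding FBd unfolding Bd using spec_le[OF UB x, of "\<lambda>i. f (rB i)" c rB] fB by simp
      ultimately show "0 \<le> Re (qform (Q - P) x)"
        using re_qform_minus[OF Qc Pc x] qQ[OF x] qP[OF x] by (simp add: algebra_simps)
    qed
    obtain s t where s: "s > 0" and t: "\<forall>i<n. 0 \<le> t i \<and> t i \<le> 1"
      and dQ: "det Q = complex_of_real s" and dP: "det P = complex_of_real (s * (\<Prod>i<n. t i))"
      using simult[OF hQ pQ hP psdP psdQP] by blast
    have p: "0 \<le> (\<Prod>i<n. t i)" "(\<Prod>i<n. t i) \<le> 1" using prod_01[OF t] by auto
    have rP: "Re (det P) = s * (\<Prod>i<n. t i)" unfolding dP by (simp only: Re_complex_of_real)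
    have "det Q = complex_of_real c ^ n * det (A + B)" unfolding Q_def using ABc Bc by simp
    then have "Re (det Q) = c ^ n * Re (det (A + B))" by (simp flip: of_real_power)
    then have rQ: "s = c ^ n * Re (det (A + B))" using dQ by simp
    have "s * (\<Prod>i<n. t i) \<le> s" using s p by (simp add: mult_le_cancel_left1)
    then show ?thesis using rP rQ s p unfolding P_def by simp
  qed
  have AB: "Re (det (A + B)) \<le> 2 ^ n / 2 * (Re (det A) + Re (det B)) \<and> 0 \<le> Re (det A) \<and> 0 \<le> Re (det B)"
    using eig
  proof
    assume e: "\<forall>k. eigenvalue B k \<longrightarrow> Re k < lambda_min A"
    have rBa: "\<forall>i<n. rB i \<le> lambda_min A"
      using e spec_eigen[OF UB Bd] by (metis Re_complex_of_real less_imp_le)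
    have rAa: "\<forall>i<n. lambda_min A \<le> rA i"
    proof (intro allI impI)
      fix i assume i: "i < n"
      have "rA i \<in> {Re k |k. eigenvalue A k}"
        using spec_eigen[OF UA Ad i] by (metis (mono_tags, lifting) Re_complex_of_real mem_Collect_eq)
      then show "lambda_min A \<le> rA i" unfolding lambda_min_def using eig_fin[OF Ac] by simp
    qed
    have "psd n (A - B)" unfolding psd_def
    proof (intro conjI ballI)
      show "hermitian n (A - B)"
        using hA hB Ac Bc unfolding hermitian_def by (simp add: ctrans_minus[OF Ac Bc] minus_carrier_mat[OF Bc])
      fix x :: "complex vec" assume x: "x \<in> carrier_vec n"
      have "Re (qform B x) \<le> Re (qform A x)"
        unfolding Ad Bd by (rule spec_sep[OF UA UB x rBa rAa])
      then show "0 \<le> Re (qform (A - B) x)" using re_qform_minus[OF Ac Bc x] by simp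
    qed
    then show ?thesis using det_AB_bound[OF pA pB] by simp
  next
    assume e: "\<forall>k. eigenvalue B k \<longrightarrow> lambda_max A < Re k"
    have rBa: "\<forall>i<n. lambda_max A \<le> rB i"
      using e spec_eigen[OF UB Bd] by (metis Re_complex_of_real less_imp_le)
    have rAa: "\<forall>i<n. rA i \<le> lambda_max A"
    proof (intro allI impI)
      fix i assume i: "i < n"
      have "rA i \<in> {Re k |k. eigenvalue A k}"
        using spec_eigen[OF UA Ad i] by (metis (mono_tags, lifting) Re_complex_of_real mem_Collect_eq)
      then show "rA i \<le> lambda_max A" unfolding lambda_max_def using eig_fin[OF Ac] by simp
    qed
    have "psd n (B - A)" unfolding psd_def
    proof (intro conjI ballI)
      show "hermitian n (B - A)"
        using hA hB Ac Bc unfolding hermitian_def by (simp add: ctrans_minus[OF Bc Ac] minus_carrier_mat[OF Ac])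
      fix x :: "complex vec" assume x: "x \<in> carrier_vec n"
      have "Re (qform A x) \<le> Re (qform B x)"
        unfolding Ad Bd by (rule spec_sep[OF UB UA x rAa rBa])
      then show "0 \<le> Re (qform (B - A) x)" using re_qform_minus[OF Bc Ac x] by simp
    qed
    then have "Re (det (B + A)) \<le> 2 ^ n / 2 * (Re (det B) + Re (det A)) \<and> 0 \<le> Re (det B) \<and> 0 \<le> Re (det A)"
      using det_AB_bound[OF pB pA] by simp
    moreover have "B + A = A + B" using comm_add_mat[OF Bc Ac] .
    ultimately show ?thesis by (simp add: add.commute)
  qed
  have "Re (det (FA + FB)) powr (1 / real n)
      \<le> 2 powr (1 - 1 / real n) * c * (Re (det A) powr (1 / real n) + Re (det B) powr (1 / real n))"
    using final_arith[OF n _ _ _ _ _ c0] LHS AB by blast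
  then show ?thesis unfolding FA_def FB_def c_def .
qed


end
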